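(* Let $\mathcal F_2$ be the set consisting of the following five graphs: the path $P_4$ on four vertices; $K_5\setminus S_2$ (the complete graph on 5 vertices with the two edges of a path $uvw$ removed, i.e. one vertex non-adjacent to exactly two others); $K_6\setminus M_2$ (the complete graph on 6 vertices with two disjoint edges removed); the graph on vertices $1,\dots,5$ with edges $24,34,23,14,45$ (a triangle with two pendant vertices attached to the same vertex of the triangle); and the graph on vertices $1,\dots,5$ with edges $12,14,23,24,34,45$ (the diamond $K_4$ minus the edge $13$, together with a pendant vertex $5$ attached to the degree-3 vertex $4$). Then $\mathcal F_2\subseteq {\bf Forb}(\Gamma_{\le 2})$.
   Context: For a finite graph $G$ and indeterminates $X_G=\{x_u : u\in V(G)\}$, the generalized Laplacian matrix $L(G,X_G)$ is the $V(G)\times V(G)$ matrix over $\mathbb{Z}[X_G]$ with $(u,u)$-entry $x_u$ and $(u,v)$-entry $-m_{uv}$ for $u\ne v$, $m_{uv}$ being the number of edges between $u$ and $v$. The $i$-th critical ideal $I_i(G,X_G)$ is the ideal of $\mathbb{Z}[X_G]$ generated by all $i\times i$ minors of $L(G,X_G)$ (with $I_i=\langle1\rangle$ for $i<1$, $I_i=\langle 0\rangle$ for $i>|V(G)|$). The algebraic co-rank $\gamma(G)$ is the number of critical ideals of $G$ equal to $\langle 1\rangle$. $\Gamma_{\le k}$ is the set of simple connected graphs $G$ with $\gamma(G)\le k$. ${\bf Forb}(\Gamma_{\le k})$ is the set of minimal (with respect to induced subgraphs) simple connected graphs $G$ with $\gamma(G)\ge k+1$; equivalently, the simple connected graphs $G$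 with $\gamma(G)=k+1$ such that $\gamma(G\setminus v)<\gamma(G)$ for every vertex $v$. *)

theory Defs
  imports "HOL-Library.Poly_Mapping" "Jordan_Normal_Form.Determinant"
begin

text \<open>Integer multivariate polynomials in indeterminates x_u (u :: nat).\<close>
type_synonym ipoly = "(nat \<Rightarrow>\<^sub>0 nat) \<Rightarrow>\<^sub>0 int"

definition var :: "nat \<Rightarrow> ipoly" where
  "var u = Poly_Mapping.single (Poly_Mapping.single u 1) 1"

definition ideal_gen :: "ipoly set \<Rightarrow> ipoly set" where
  "ideal_gen S = {(\<Sum>m\<in>F. c m * m) | F c. finite F \<and> F \<subseteq> S}"

text \<open>A graph is given by a finite vertex set V of naturals and an edge relation E
  (only its restriction to V matters). Simple graph: E symmetric and irreflexive.\<close>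
definition simple_graph :: "nat set \<Rightarrow> (nat \<Rightarrow> nat \<Rightarrow> bool) \<Rightarrow> bool" where
  "simple_graph V E \<longleftrightarrow> finite V \<and> (\<forall>u\<in>V. \<forall>v\<in>V. E u v \<longleftrightarrow> E v u) \<and> (\<forall>u\<in>V. \<not> E u u)"

definition connected_graph :: "nat set \<Rightarrow> (nat \<Rightarrow> nat \<Rightarrow> bool) \<Rightarrow> bool" where
  "connected_graph V E \<longleftrightarrow> V \<noteq> {} \<and>
     (\<forall>u\<in>V. \<forall>v\<in>V. (\<lambda>a b. a \<in> V \<and> b \<in> V \<and> E a b)\<^sup>*\<^sup>* u v)"

definition gen_lap :: "(nat \<Rightarrow> nat \<Rightarrow> bool) \<Rightarrow> nat \<Rightarrow> nat \<Rightarrow> ipoly" where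
  "gen_lap E u v = (if u = v then var u else - (if E u v then 1 else 0))"

definition minor :: "(nat \<Rightarrow> nat \<Rightarrow> bool) \<Rightarrow> nat set \<Rightarrow> nat set \<Rightarrow> ipoly" where
  "minor E R C = (let rs = sorted_list_of_set R; cs = sorted_list_of_set C
     in det (mat (card R) (card C) (\<lambda>(a, b). gen_lap E (rs ! a) (cs ! b))))"

definition minors :: "nat set \<Rightarrow> (nat \<Rightarrow> nat \<Rightarrow> bool) \<Rightarrow> nat \<Rightarrow> ipoly set" where
  "minors V E i = {minor E R C | R C. R \<subseteq> V \<and> C \<subseteq> V \<and> card R = i \<and> card C = i}"

definition critical_ideal :: "nat set \<Rightarrow> (nat \<Rightarrow> nat \<Rightarrow> bool) \<Rightarrow> int \<Rightarrow> ipoly set" where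
  "critical_ideal V E i =
     (if i < 1 then UNIV
      else if nat i > card V then {0}
      else ideal_gen (minors V E (nat i)))"

text \<open>Algebraic co-rank: number of critical ideals equal to the unit ideal
  (the ideals with index i < 1 are trivially \<langle>1\<rangle> by convention and are not counted).\<close>
definition gamma :: "nat set \<Rightarrow> (nat \<Rightarrow> nat \<Rightarrow> bool) \<Rightarrow> nat" where
  "gamma V E = card {i::nat. 1 \<le> i \<and> i \<le> card V \<and> critical_ideal V E (int i) = UNIV}"

definition del_vertex :: "nat set \<Rightarrow> nat \<Rightarrow> nat set" where
  "del_vertex V v = V - {v}"

definition Forb_le :: "nat \<Rightarrow> nat set \<Rightarrow> (nat \<Rightarrow> nat \<Rightarrow> bool) \<Rightarrow> bool" where
  "Forb_le k V E \<longleftrightarrow> simple_graph V E \<and> connected_graph V E \<and> gamma V E = k + 1 \<and>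
     (\<forall>v\<in>V. gamma (del_vertex V v) E < gamma V E)"

definition edges_of :: "(nat \<times> nat) list \<Rightarrow> nat \<Rightarrow> nat \<Rightarrow> bool" where
  "edges_of l u v \<longleftrightarrow> (u, v) \<in> set l \<or> (v, u) \<in> set l"

definition complete_minus :: "nat set \<Rightarrow> (nat \<times> nat) list \<Rightarrow> nat \<Rightarrow> nat \<Rightarrow> bool" where
  "complete_minus V l u v \<longleftrightarrow> u \<in> V \<and> v \<in> V \<and> u \<noteq> v \<and> \<not> edges_of l u v"

definition F2 :: "(nat set \<times> (nat \<Rightarrow> nat \<Rightarrow> bool)) set" where
  "F2 = {({1..4}, edges_of [(1,2),(2,3),(3,4)]),
         ({1..5}, complete_minus {1..5} [(1,2),(2,3)]),
         ({1..6}, complete_minus {1..6} [(1,2),(3,4)]),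
         ({1..5}, edges_of [(2,4),(3,4),(2,3),(1,4),(4,5)]),
         ({1..5}, edges_of [(1,2),(1,4),(2,3),(2,4),(3,4),(4,5)])}"

end

theory Submission imports Defs begin

definition mono :: "(nat \<Rightarrow> int) \<Rightarrow> (nat \<Rightarrow>\<^sub>0 nat) \<Rightarrow> int" where
  "mono x m = (\<Prod>v\<in>Poly_Mapping.keys m. x v ^ Poly_Mapping.lookup m v)"

definition ev :: "(nat \<Rightarrow> int) \<Rightarrow> ipoly \<Rightarrow> int" where
  "ev x p = (\<Sum>m\<in>Poly_Mapping.keys p. Poly_Mapping.lookup p m * mono x m)"

lemma mono_super: "finite S \<Longrightarrow> Poly_Mapping.keys m \<subseteq> S \<Longrightarrow> mono x m = (\<Prod>v\<in>S. x v ^ Poly_Mapping.lookup m v)"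
  unfolding mono_def by (rule prod.mono_neutral_left) (auto simp: in_keys_iff)

lemma mono_add: "mono x (m + n) = mono x m * mono x n"
proof -
  have f: "finite (Poly_Mapping.keys m \<union> Poly_Mapping.keys n)" by simp
  have "mono x (m + n) = (\<Prod>v\<in>Poly_Mapping.keys m \<union> Poly_Mapping.keys n. x v ^ Poly_Mapping.lookup (m+n) v)"
    by (rule mono_super[OF f]) (simp add: keys_add)
  also have "\<dots> = (\<Prod>v\<in>Poly_Mapping.keys m \<union> Poly_Mapping.keys n. x v ^ Poly_Mapping.lookup m v) * (\<Prod>v\<in>Poly_Mapping.keys m \<union> Poly_Mapping.keys n. x v ^ Poly_Mapping.lookup n v)"
    by (simp add: lookup_add power_add prod.distrib)
  also have "\<dots> = mono x m * mono x n"
    using mono_super[OF f, of m x] mono_super[OF f, of n x] by simp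
  finally show ?thesis .
qed

lemma mono_zero: "mono x 0 = 1" by (simp add: mono_def)

lemma ev_super: "finite S \<Longrightarrow> Poly_Mapping.keys p \<subseteq> S \<Longrightarrow> ev x p = (\<Sum>m\<in>S. Poly_Mapping.lookup p m * mono x m)"
  unfolding ev_def by (rule sum.mono_neutral_left) (auto simp: in_keys_iff)

lemma ev_add: "ev x (p + q) = ev x p + ev x q"
proof -
  have f: "finite (Poly_Mapping.keys p \<union> Poly_Mapping.keys q)" by simp
  show ?thesis
    using ev_super[OF f, of "p+q" x] ev_super[OF f, of p x] ev_super[OF f, of q x]
    by (simp add: keys_add lookup_add sum.distrib algebra_simps)
qed

lemma ev_single: "ev x (Poly_Mapping.single m c) = c * mono x m"
  by (subst ev_super[of "{m}"]) auto

lemma ev_zero: "ev x 0 = 0" by (simp add: ev_def)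

lemma ev_sum: "ev x (\<Sum>i\<in>A. f i) = (\<Sum>i\<in>A. ev x (f i))"
  by (induct A rule: infinite_finite_induct) (auto simp: ev_zero ev_add)

lemma poly_expand: "p = (\<Sum>m\<in>Poly_Mapping.keys p. Poly_Mapping.single m (Poly_Mapping.lookup p m))"
  by (rule poly_mapping_eqI) (auto simp: lookup_sum lookup_single when_def in_keys_iff
     intro: sum.neutral)

lemma ev_mult: "ev x (p * q) = ev x p * ev x q"
proof -
  have "p * q = (\<Sum>m\<in>Poly_Mapping.keys p. Poly_Mapping.single m (Poly_Mapping.lookup p m)) *
                (\<Sum>n\<in>Poly_Mapping.keys q. Poly_Mapping.single n (Poly_Mapping.lookup q n))"
    using poly_expand[of p] poly_expand[of q] by simp
  also have "\<dots> = (\<Sum>m\<in>Poly_Mapping.keys p. \<Sum>n\<in>Poly_Mapping.keys q.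
       Poly_Mapping.single (m + n) (Poly_Mapping.lookup p m * Poly_Mapping.lookup q n))"
    by (simp add: sum_distrib_left sum_distrib_right mult_single sum.swap[of _ "Poly_Mapping.keys q"])
  finally have "ev x (p * q) = (\<Sum>m\<in>Poly_Mapping.keys p. \<Sum>n\<in>Poly_Mapping.keys q.
       (Poly_Mapping.lookup p m * mono x m) * (Poly_Mapping.lookup q n * mono x n))"
    by (simp add: ev_sum ev_single mono_add mult.assoc mult.left_commute)
  also have "\<dots> = ev x p * ev x q"
    by (simp add: ev_def sum_distrib_left sum_distrib_right sum.swap[of _ "Poly_Mapping.keys q"])
  finally show ?thesis .
qed

lemma ev_one: "ev x 1 = 1"
proof -
  have "(1::ipoly) = Poly_Mapping.single 0 1" by simp
  then show ?thesis by (metis ev_single mono_zero mult_1)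
qed

lemma ev_var: "ev x (var u) = x u"
  by (simp add: var_def ev_single mono_def)

interpretation evh: comm_ring_hom "ev x"
  by unfold_locales (auto simp: ev_one ev_add ev_mult ev_zero)

lemma ev_neg: "ev x (- p) = - ev x p" by (rule evh.hom_uminus)

lemma ev_gen_lap: "ev x (gen_lap E u v) = (if u = v then x u else if E u v then -1 else 0)"
  by (simp add: gen_lap_def ev_var ev_neg ev_one ev_zero)

lemma ideal_nonunit:
  assumes "\<forall>m\<in>S. ev x m = 0" shows "ideal_gen S \<noteq> UNIV"
proof
  assume "ideal_gen S = UNIV"
  then have "1 \<in> ideal_gen S" by simp
  then obtain F c where F: "finite F" "F \<subseteq> S" and e: "1 = (\<Sum>m\<in>F. c m * m)"
    unfolding ideal_gen_def by auto
  have "ev x 1 = (\<Sum>m\<in>F. ev x (c m) * ev x m)" by (simp add: e ev_sum ev_mult)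
  also have "\<dots> = 0" using F assms by (auto intro!: sum.neutral)
  finally show False by (simp add: ev_one)
qed

lemma ideal_unit:
  assumes "m \<in> S" "m = 1 \<or> m = -1" shows "ideal_gen S = UNIV"
proof -
  { fix p :: ipoly
    have e: "p = (\<Sum>n\<in>{m}. (p * m) * n)" using assms(2) by auto
    have "p \<in> ideal_gen S" unfolding ideal_gen_def
      by (rule CollectI, rule exI[of _ "{m}"], rule exI[of _ "\<lambda>_. p * m"]) (use e assms(1) in auto) }
  then show ?thesis by auto
qed

lemma det_zero_row:
  assumes A: "A \<in> carrier_mat n n" and k: "k < n" and z: "\<And>j. j < n \<Longrightarrow> A $$ (k, j) = 0"
  shows "det A = 0"
proof -
  { fix p assume p: "p permutes {0..<n}"
    then have "p k < n" using k by (simp add: permutes_in_image)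
    then have "(\<Prod>i = 0..<n. A $$ (i, p i)) = 0"
      using k z by (intro prod_zero) (auto intro!: bexI[of _ k]) }
  then show ?thesis by (simp add: det_def'[OF A])
qed

lemma lowrank_det:
  fixes f :: "nat \<Rightarrow> nat \<Rightarrow> int"
  assumes f: "\<And>a b. a < i \<Longrightarrow> b < i \<Longrightarrow> f a b = (\<Sum>k<r. U k a * W k b)" and r: "r < i"
  shows "det (mat i i (\<lambda>(a, b). f a b)) = 0"
proof -
  define P where "P = mat i i (\<lambda>(a, k). if k < r then U k a else 0)"
  define Q where "Q = mat i i (\<lambda>(k, b). if k < r then W k b else (0::int))"
  have PQ: "mat i i (\<lambda>(a, b). f a b) = P * Q"
  proof (rule eq_matI)
    fix a b assume a: "a < dim_row (P * Q)" and b: "b < dim_col (P * Q)"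
    then have ai: "a < i" and bi: "b < i" by (auto simp: P_def Q_def)
    have "(P * Q) $$ (a, b) = (\<Sum>k\<in>{0..<i}. (if k < r then U k a else 0) * (if k < r then W k b else 0))"
      using ai bi by (simp add: P_def Q_def scalar_prod_def)
    also have "\<dots> = (\<Sum>k\<in>{0..<r}. U k a * W k b)"
      using r by (intro sum.mono_neutral_cong_right) auto
    finally show "mat i i (\<lambda>(a, b). f a b) $$ (a, b) = (P * Q) $$ (a, b)"
      using ai bi f[OF ai bi] by (simp add: lessThan_atLeast0)
  qed (auto simp: P_def Q_def)
  have "det Q = 0"
    by (rule det_zero_row[of Q i r]) (use r in \<open>auto simp: Q_def\<close>)
  then show ?thesis
    using PQ det_mult[of P i Q] by (simp add: P_def Q_def)
qed

lemma det1: "det (mat 1 1 f) = f (0, 0)"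
  by (subst det_single) auto

lemma det1S: "det (mat (Suc 0) (Suc 0) f) = f (0, 0)"
  using det1[of f] by simp

lemma det2: "det (mat 2 2 f) = f (0,0) * f (1,1) - f (0,1) * (f (1,0) :: 'a :: comm_ring_1)"
proof -
  have "det (mat 2 2 f) = (\<Sum>j<2. mat 2 2 f $$ (0,j) * cofactor (mat 2 2 f) 0 j)"
    by (rule laplace_expansion_row) auto
  also have "\<dots> = f (0,0) * f (1,1) - f (0,1) * f (1,0)"
    by (simp add: numeral_2_eq_2 cofactor_def mat_delete_def det1S)
  finally show ?thesis .
qed

lemma det2S: "det (mat (Suc (Suc 0)) (Suc (Suc 0)) f) = f (0,0) * f (1,1) - f (0,1) * (f (1,0) :: 'a :: comm_ring_1)"
  using det2[of f] by (simp add: numeral_2_eq_2)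

lemma det3: "det (mat 3 3 f) =
   f (0,0) * (f (1,1) * f (2,2) - f (1,2) * f (2,1))
 - f (0,1) * (f (1,0) * f (2,2) - f (1,2) * f (2,0))
 + f (0,2) * (f (1,0) * f (2,1) - f (1,1) * (f (2,0) :: 'a :: comm_ring_1))"
proof -
  have "det (mat 3 3 f) = (\<Sum>j<3. mat 3 3 f $$ (0,j) * cofactor (mat 3 3 f) 0 j)"
    by (rule laplace_expansion_row) auto
  also have "\<dots> = f (0,0) * (f (1,1) * f (2,2) - f (1,2) * f (2,1))
 - f (0,1) * (f (1,0) * f (2,2) - f (1,2) * f (2,0))
 + f (0,2) * (f (1,0) * f (2,1) - f (1,1) * f (2,0))"
    by (simp add: numeral_3_eq_3 cofactor_def mat_delete_def det2S eval_nat_numeral algebra_simps)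
  finally show ?thesis .
qed

lemma det3S: "det (mat (Suc (Suc (Suc 0))) (Suc (Suc (Suc 0))) f) =
   f (0,0) * (f (1,1) * f (2,2) - f (1,2) * f (2,1))
 - f (0,1) * (f (1,0) * f (2,2) - f (1,2) * f (2,0))
 + f (0,2) * (f (1,0) * f (2,1) - f (1,1) * (f (2,0) :: 'a :: comm_ring_1))"
  using det3[of f] by (simp add: numeral_3_eq_3)

lemma minor_ev_zero:
  assumes fac: "\<forall>u\<in>V. \<forall>v\<in>V. (if u = v then x u else if E u v then -1 else 0) = (\<Sum>k<r. U k u * W k v)"
    and RC: "R \<subseteq> V" "C \<subseteq> V" "card R = i" "card C = i" and fin: "finite V" and r: "r < i"
  shows "ev x (minor E R C) = 0"
proof -
  define rs where "rs = sorted_list_of_set R"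
  define cs where "cs = sorted_list_of_set C"
  have fR: "finite R" "finite C" using RC fin finite_subset by auto
  have rs: "\<And>a. a < i \<Longrightarrow> rs ! a \<in> V" using RC fR unfolding rs_def
    by (metis length_sorted_list_of_set nth_mem set_sorted_list_of_set subsetD)
  have cs: "\<And>a. a < i \<Longrightarrow> cs ! a \<in> V" using RC fR unfolding cs_def
    by (metis length_sorted_list_of_set nth_mem set_sorted_list_of_set subsetD)
  have "ev x (minor E R C) = ev x (det (mat i i (\<lambda>(a, b). gen_lap E (rs ! a) (cs ! b))))"
    unfolding minor_def rs_def cs_def Let_def using RC by simp
  also have "\<dots> = det (map_mat (ev x) (mat i i (\<lambda>(a, b). gen_lap E (rs ! a) (cs ! b))))"
    by (rule evh.hom_det[symmetric])
  also have "map_mat (ev x) (mat i i (\<lambda>(a, b). gen_lap E (rs ! a) (cs ! b)))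
     = mat i i (\<lambda>(a, b). ev x (gen_lap E (rs ! a) (cs ! b)))"
    by (rule eq_matI) auto
  also have "det \<dots> = 0"
  proof (rule lowrank_det[OF _ r])
    fix a b assume a: "a < i" and b: "b < i"
    show "ev x (gen_lap E (rs ! a) (cs ! b)) = (\<Sum>k<r. U k (rs ! a) * W k (cs ! b))"
      using fac rs[OF a] cs[OF b] by (simp add: ev_gen_lap)
  qed
  finally show ?thesis .
qed

lemma crit_nonunit:
  fixes U W :: "nat \<Rightarrow> nat \<Rightarrow> int" and x :: "nat \<Rightarrow> int"
  assumes fac: "\<forall>u\<in>V. \<forall>v\<in>V. (if u = v then x u else if E u v then -1 else 0) = (\<Sum>k<r. U k u * W k v)"
    and fin: "finite V" and r: "r < i" and i: "1 \<le> i"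
  shows "critical_ideal V E (int i) \<noteq> UNIV"
proof (cases "i > card V")
  case True
  have "{0::ipoly} \<noteq> UNIV" by (metis UNIV_I singletonD zero_neq_one)
  then show ?thesis using i True by (auto simp: critical_ideal_def)
next
  case False
  have "ideal_gen (minors V E i) \<noteq> UNIV"
    by (rule ideal_nonunit[of _ x]) (auto simp: minors_def intro: minor_ev_zero[OF fac _ _ _ _ fin r])
  then show ?thesis using False i by (auto simp: critical_ideal_def)
qed

lemma crit_unit:
  assumes "R \<subseteq> V" "C \<subseteq> V" "card R = i" "card C = i" "finite V" "1 \<le> i"
    "minor E R C = 1 \<or> minor E R C = -1"
  shows "critical_ideal V E (int i) = UNIV"
proof -
  have "i \<le> card V" using assms card_mono by metis
  moreover have "ideal_gen (minors V E i) = UNIV"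
    by (rule ideal_unit[of "minor E R C"]) (use assms in \<open>auto simp: minors_def\<close>)
  ultimately show ?thesis using assms by (auto simp: critical_ideal_def)
qed

lemma gamma_le2:
  fixes U W :: "nat \<Rightarrow> nat \<Rightarrow> int" and x :: "nat \<Rightarrow> int"
  assumes fac: "\<forall>u\<in>V. \<forall>v\<in>V. (if u = v then x u else if E u v then -1 else 0) = (\<Sum>k<2. U k u * W k v)"
    and fin: "finite V"
  shows "gamma V E < 3"
proof -
  have "{i::nat. 1 \<le> i \<and> i \<le> card V \<and> critical_ideal V E (int i) = UNIV} \<subseteq> {1,2}"
  proof
    fix i assume "i \<in> {i::nat. 1 \<le> i \<and> i \<le> card V \<and> critical_ideal V E (int i) = UNIV}"
    then have "1 \<le> i" "critical_ideal V E (int i) = UNIV" by auto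
    then have "\<not> 2 < i" using crit_nonunit[OF fac fin, of i] by auto
    then show "i \<in> {1,2}" using \<open>1 \<le> i\<close> by auto
  qed
  then have "gamma V E \<le> card {1::nat,2}" unfolding gamma_def by (rule card_mono[rotated]) auto
  then show ?thesis by simp
qed

lemma gamma_eq3:
  fixes U W :: "nat \<Rightarrow> nat \<Rightarrow> int" and x :: "nat \<Rightarrow> int"
  assumes fac: "\<forall>u\<in>V. \<forall>v\<in>V. (if u = v then x u else if E u v then -1 else 0) = (\<Sum>k<3. U k u * W k v)"
    and fin: "finite V" and c: "3 \<le> card V"
    and u1: "critical_ideal V E 1 = UNIV" and u2: "critical_ideal V E 2 = UNIV"
    and u3: "critical_ideal V E 3 = UNIV"
  shows "gamma V E = 3"
proof -
  have "{i::nat. 1 \<le> i \<and> i \<le> card V \<and> critical_ideal V E (int i) = UNIV} = {1,2,3}"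
  proof (rule equalityI)
   show "{i::nat. 1 \<le> i \<and> i \<le> card V \<and> critical_ideal V E (int i) = UNIV} \<subseteq> {1,2,3}"
   proof
    fix i assume "i \<in> {i::nat. 1 \<le> i \<and> i \<le> card V \<and> critical_ideal V E (int i) = UNIV}"
    then have "1 \<le> i" "critical_ideal V E (int i) = UNIV" by auto
    then have "\<not> 3 < i" using crit_nonunit[OF fac fin, of i] by auto
    then show "i \<in> {1,2,3}" using \<open>1 \<le> i\<close> by auto
   qed
  next
    show "{1,2,3} \<subseteq> {i::nat. 1 \<le> i \<and> i \<le> card V \<and> critical_ideal V E (int i) = UNIV}"
      using u1 u2 u3 c by auto
  qed
  then show ?thesis unfolding gamma_def by simp
qed
lemma g0_V: "{1..4} = ({1,2,3,4} :: nat set)" by auto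
lemma g0_fac: "\<forall>u\<in>{1..4}. \<forall>v\<in>{1..4}. (if u = v then (\<lambda>u. ([0, -3, -1, -2, -2]::int list) ! u) u else if (edges_of [(1,2),(2,3),(3,4)]) u v then -1 else 0) = (\<Sum>k<3. (\<lambda>k u. ([[0, 1, 0, 0, 1], [0, 0, 1, 0, -3], [0, 0, 0, 1, 2]]::int list list) ! k ! u) k u * (\<lambda>k u. ([[0, -3, -1, 0, 0], [0, -1, -1, -1, 0], [0, 0, -1, -2, -1]]::int list list) ! k ! u) k v)"
  unfolding g0_V by (simp add: eval_nat_numeral edges_of_def complete_minus_def)
lemma g0_u1: "critical_ideal {1..4} (edges_of [(1,2),(2,3),(3,4)]) 1 = UNIV"
  using crit_unit[of "{1}" "{1..4}" "{2}" 1 "edges_of [(1,2),(2,3),(3,4)]"]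
  by (simp add: minor_def Let_def eval_nat_numeral det1S det2S det3S gen_lap_def edges_of_def complete_minus_def)
lemma g0_u2: "critical_ideal {1..4} (edges_of [(1,2),(2,3),(3,4)]) 2 = UNIV"
  using crit_unit[of "{1,2}" "{1..4}" "{2,3}" 2 "edges_of [(1,2),(2,3),(3,4)]"]
  by (simp add: minor_def Let_def eval_nat_numeral det1S det2S det3S gen_lap_def edges_of_def complete_minus_def)
lemma g0_u3: "critical_ideal {1..4} (edges_of [(1,2),(2,3),(3,4)]) 3 = UNIV"
  using crit_unit[of "{1,2,3}" "{1..4}" "{2,3,4}" 3 "edges_of [(1,2),(2,3),(3,4)]"]
  by (simp add: minor_def Let_def eval_nat_numeral det1S det2S det3S gen_lap_def edges_of_def complete_minus_def)
lemma g0_gamma: "gamma {1..4} (edges_of [(1,2),(2,3),(3,4)]) = 3"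
  by (rule gamma_eq3[OF g0_fac _ _ g0_u1 g0_u2 g0_u3]) auto
lemma g0_d1: "gamma (del_vertex {1..4} 1) (edges_of [(1,2),(2,3),(3,4)]) < 3"
proof -
  have e: "del_vertex {1..4} 1 = {2,3,4}" by (auto simp: del_vertex_def)
  show ?thesis unfolding e
    by (rule gamma_le2[where x="(\<lambda>u. ([0, 0, -3, 0, 3]::int list) ! u)" and U="(\<lambda>k u. ([[0, 0, 1, 0, 1], [0, 0, 0, 1, -3]]::int list list) ! k ! u)" and W="(\<lambda>k u. ([[0, 0, -3, -1, 0], [0, 0, -1, 0, -1]]::int list list) ! k ! u)"]) (simp_all add: eval_nat_numeral edges_of_def complete_minus_def)
qed
lemma g0_d2: "gamma (del_vertex {1..4} 2) (edges_of [(1,2),(2,3),(3,4)]) < 3"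
proof -
  have e: "del_vertex {1..4} 2 = {1,3,4}" by (auto simp: del_vertex_def)
  show ?thesis unfolding e
    by (rule gamma_le2[where x="(\<lambda>u. ([0, -3, 0, -1, -1]::int list) ! u)" and U="(\<lambda>k u. ([[0, 1, 0, 0, 0], [0, 0, 0, 1, 1]]::int list list) ! k ! u)" and W="(\<lambda>k u. ([[0, -3, 0, 0, 0], [0, 0, 0, -1, -1]]::int list list) ! k ! u)"]) (simp_all add: eval_nat_numeral edges_of_def complete_minus_def)
qed
lemma g0_d3: "gamma (del_vertex {1..4} 3) (edges_of [(1,2),(2,3),(3,4)]) < 3"
proof -
  have e: "del_vertex {1..4} 3 = {1,2,4}" by (auto simp: del_vertex_def)
  show ?thesis unfolding e
    by (rule gamma_le2[where x="(\<lambda>u. ([0, -3, -3, 0, 0]::int list) ! u)" and U="(\<lambda>k u. ([[0, 1, 0, 0, 0], [0, 0, 1, 0, 0]]::int list list) ! k ! u)" and W="(\<lambda>k u. ([[0, -3, -1, 0, 0], [0, -1, -3, 0, 0]]::int list list) ! k ! u)"]) (simp_all add: eval_nat_numeral edges_of_def complete_minus_def)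
qed
lemma g0_d4: "gamma (del_vertex {1..4} 4) (edges_of [(1,2),(2,3),(3,4)]) < 3"
proof -
  have e: "del_vertex {1..4} 4 = {1,2,3}" by (auto simp: del_vertex_def)
  show ?thesis unfolding e
    by (rule gamma_le2[where x="(\<lambda>u. ([0, -3, 0, 3, 0]::int list) ! u)" and U="(\<lambda>k u. ([[0, 1, 0, 1, 0], [0, 0, 1, -3, 0]]::int list list) ! k ! u)" and W="(\<lambda>k u. ([[0, -3, -1, 0, 0], [0, -1, 0, -1, 0]]::int list list) ! k ! u)"]) (simp_all add: eval_nat_numeral edges_of_def complete_minus_def)
qed
lemma g1_V: "{1..5} = ({1,2,3,4,5} :: nat set)" by auto
lemma g1_fac: "\<forall>u\<in>{1..5}. \<forall>v\<in>{1..5}. (if u = v then (\<lambda>u. ([0, -3, -1, 1, -1, -1]::int list) ! u) u else if (complete_minus {1..5} [(1,2),(2,3)]) u v then -1 else 0) = (\<Sum>k<3. (\<lambda>k u. ([[0, 1, 0, 1, 0, 0], [0, 0, 1, 2, 0, 0], [0, 0, 0, -2, 1, 1]]::int list list) ! k ! u) k u * (\<lambda>k u. ([[0, -3, 0, -1, -1, -1], [0, 0, -1, 0, -1, -1], [0, -1, -1, -1, -1, -1]]::int list list) ! k ! u) k v)"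
  unfolding g1_V by (simp add: eval_nat_numeral edges_of_def complete_minus_def)
lemma g1_u1: "critical_ideal {1..5} (complete_minus {1..5} [(1,2),(2,3)]) 1 = UNIV"
  using crit_unit[of "{1}" "{1..5}" "{3}" 1 "complete_minus {1..5} [(1,2),(2,3)]"]
  by (simp add: minor_def Let_def eval_nat_numeral det1S det2S det3S gen_lap_def edges_of_def complete_minus_def)
lemma g1_u2: "critical_ideal {1..5} (complete_minus {1..5} [(1,2),(2,3)]) 2 = UNIV"
  using crit_unit[of "{1,2}" "{1..5}" "{3,4}" 2 "complete_minus {1..5} [(1,2),(2,3)]"]
  by (simp add: minor_def Let_def eval_nat_numeral det1S det2S det3S gen_lap_def edges_of_def complete_minus_def)
lemma g1_u3: "critical_ideal {1..5} (complete_minus {1..5} [(1,2),(2,3)]) 3 = UNIV"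
  using crit_unit[of "{1,2,4}" "{1..5}" "{2,3,5}" 3 "complete_minus {1..5} [(1,2),(2,3)]"]
  by (simp add: minor_def Let_def eval_nat_numeral det1S det2S det3S gen_lap_def edges_of_def complete_minus_def)
lemma g1_gamma: "gamma {1..5} (complete_minus {1..5} [(1,2),(2,3)]) = 3"
  by (rule gamma_eq3[OF g1_fac _ _ g1_u1 g1_u2 g1_u3]) auto
lemma g1_d1: "gamma (del_vertex {1..5} 1) (complete_minus {1..5} [(1,2),(2,3)]) < 3"
proof -
  have e: "del_vertex {1..5} 1 = {2,3,4,5}" by (auto simp: del_vertex_def)
  show ?thesis unfolding e
    by (rule gamma_le2[where x="(\<lambda>u. ([0, 0, -2, -2, -1, -1]::int list) ! u)" and U="(\<lambda>k u. ([[0, 0, 1, -1, 0, 0], [0, 0, 0, 2, 1, 1]]::int list list) ! k ! u)" and W="(\<lambda>k u. ([[0, 0, -2, 0, -1, -1], [0, 0, -1, -1, -1, -1]]::int list list) ! k ! u)"]) (simp_all add: eval_nat_numeral edges_of_def complete_minus_def)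
qed
lemma g1_d2: "gamma (del_vertex {1..5} 2) (complete_minus {1..5} [(1,2),(2,3)]) < 3"
proof -
  have e: "del_vertex {1..5} 2 = {1,3,4,5}" by (auto simp: del_vertex_def)
  show ?thesis unfolding e
    by (rule gamma_le2[where x="(\<lambda>u. ([0, -3, 0, -1, -1, -1]::int list) ! u)" and U="(\<lambda>k u. ([[0, 1, 0, 0, 0, 0], [0, 0, 0, 1, 1, 1]]::int list list) ! k ! u)" and W="(\<lambda>k u. ([[0, -3, 0, -1, -1, -1], [0, -1, 0, -1, -1, -1]]::int list list) ! k ! u)"]) (simp_all add: eval_nat_numeral edges_of_def complete_minus_def)
qed
lemma g1_d3: "gamma (del_vertex {1..5} 3) (complete_minus {1..5} [(1,2),(2,3)]) < 3"
proof -
  have e: "del_vertex {1..5} 3 = {1,2,4,5}" by (auto simp: del_vertex_def)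
  show ?thesis unfolding e
    by (rule gamma_le2[where x="(\<lambda>u. ([0, -2, -2, 0, -1, -1]::int list) ! u)" and U="(\<lambda>k u. ([[0, 1, -1, 0, 0, 0], [0, 0, 2, 0, 1, 1]]::int list list) ! k ! u)" and W="(\<lambda>k u. ([[0, -2, 0, 0, -1, -1], [0, -1, -1, 0, -1, -1]]::int list list) ! k ! u)"]) (simp_all add: eval_nat_numeral edges_of_def complete_minus_def)
qed
lemma g1_d4: "gamma (del_vertex {1..5} 4) (complete_minus {1..5} [(1,2),(2,3)]) < 3"
proof -
  have e: "del_vertex {1..5} 4 = {1,2,3,5}" by (auto simp: del_vertex_def)
  show ?thesis unfolding e
    by (rule gamma_le2[where x="(\<lambda>u. ([0, -1, -1, -1, 0, -2]::int list) ! u)" and U="(\<lambda>k u. ([[0, 1, 0, 1, 0, 1], [0, 0, 1, 0, 0, 1]]::int list list) ! k ! u)" and W="(\<lambda>k u. ([[0, -1, 0, -1, 0, -1], [0, 0, -1, 0, 0, -1]]::int list list) ! k ! u)"]) (simp_all add: eval_nat_numeral edges_of_def complete_minus_def)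
qed
lemma g1_d5: "gamma (del_vertex {1..5} 5) (complete_minus {1..5} [(1,2),(2,3)]) < 3"
proof -
  have e: "del_vertex {1..5} 5 = {1,2,3,4}" by (auto simp: del_vertex_def)
  show ?thesis unfolding e
    by (rule gamma_le2[where x="(\<lambda>u. ([0, -1, -1, -1, -2, 0]::int list) ! u)" and U="(\<lambda>k u. ([[0, 1, 0, 1, 1, 0], [0, 0, 1, 0, 1, 0]]::int list list) ! k ! u)" and W="(\<lambda>k u. ([[0, -1, 0, -1, -1, 0], [0, 0, -1, 0, -1, 0]]::int list list) ! k ! u)"]) (simp_all add: eval_nat_numeral edges_of_def complete_minus_def)
qed
lemma g2_V: "{1..6} = ({1,2,3,4,5,6} :: nat set)" by auto
lemma g2_fac: "\<forall>u\<in>{1..6}. \<forall>v\<in>{1..6}. (if u = v then (\<lambda>u. ([0, -2, -2, -2, -2, -1, -1]::int list) ! u) u else if (complete_minus {1..6} [(1,2),(3,4)]) u v then -1 else 0) = (\<Sum>k<3. (\<lambda>k u. ([[0, 1, -1, 0, 0, 0, 0], [0, 0, 0, 1, -1, 0, 0], [0, 0, 2, 0, 2, 1, 1]]::int list list) ! k ! u) k u * (\<lambda>k u. ([[0, -2, 0, -1, -1, -1, -1], [0, -1, -1, -2, 0, -1, -1], [0, -1, -1, -1, -1, -1, -1]]::int list list) ! k ! u) k v)"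
  unfolding g2_V by (simp add: eval_nat_numeral edges_of_def complete_minus_def)
lemma g2_u1: "critical_ideal {1..6} (complete_minus {1..6} [(1,2),(3,4)]) 1 = UNIV"
  using crit_unit[of "{1}" "{1..6}" "{3}" 1 "complete_minus {1..6} [(1,2),(3,4)]"]
  by (simp add: minor_def Let_def eval_nat_numeral det1S det2S det3S gen_lap_def edges_of_def complete_minus_def)
lemma g2_u2: "critical_ideal {1..6} (complete_minus {1..6} [(1,2),(3,4)]) 2 = UNIV"
  using crit_unit[of "{1,3}" "{1..6}" "{1,4}" 2 "complete_minus {1..6} [(1,2),(3,4)]"]
  by (simp add: minor_def Let_def eval_nat_numeral det1S det2S det3S gen_lap_def edges_of_def complete_minus_def)
lemma g2_u3: "critical_ideal {1..6} (complete_minus {1..6} [(1,2),(3,4)]) 3 = UNIV"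
  using crit_unit[of "{1,3,5}" "{1..6}" "{2,4,6}" 3 "complete_minus {1..6} [(1,2),(3,4)]"]
  by (simp add: minor_def Let_def eval_nat_numeral det1S det2S det3S gen_lap_def edges_of_def complete_minus_def)
lemma g2_gamma: "gamma {1..6} (complete_minus {1..6} [(1,2),(3,4)]) = 3"
  by (rule gamma_eq3[OF g2_fac _ _ g2_u1 g2_u2 g2_u3]) auto
lemma g2_d1: "gamma (del_vertex {1..6} 1) (complete_minus {1..6} [(1,2),(3,4)]) < 3"
proof -
  have e: "del_vertex {1..6} 1 = {2,3,4,5,6}" by (auto simp: del_vertex_def)
  show ?thesis unfolding e
    by (rule gamma_le2[where x="(\<lambda>u. ([0, 0, -1, -2, -2, -1, -1]::int list) ! u)" and U="(\<lambda>k u. ([[0, 0, 1, 0, 2, 1, 1], [0, 0, 0, 1, -1, 0, 0]]::int list list) ! k ! u)" and W="(\<lambda>k u. ([[0, 0, -1, -1, -1, -1, -1], [0, 0, -1, -2, 0, -1, -1]]::int list list) ! k ! u)"]) (simp_all add: eval_nat_numeral edges_of_def complete_minus_def)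
qed
lemma g2_d2: "gamma (del_vertex {1..6} 2) (complete_minus {1..6} [(1,2),(3,4)]) < 3"
proof -
  have e: "del_vertex {1..6} 2 = {1,3,4,5,6}" by (auto simp: del_vertex_def)
  show ?thesis unfolding e
    by (rule gamma_le2[where x="(\<lambda>u. ([0, -1, 0, -2, -2, -1, -1]::int list) ! u)" and U="(\<lambda>k u. ([[0, 1, 0, 0, 2, 1, 1], [0, 0, 0, 1, -1, 0, 0]]::int list list) ! k ! u)" and W="(\<lambda>k u. ([[0, -1, 0, -1, -1, -1, -1], [0, -1, 0, -2, 0, -1, -1]]::int list list) ! k ! u)"]) (simp_all add: eval_nat_numeral edges_of_def complete_minus_def)
qed
lemma g2_d3: "gamma (del_vertex {1..6} 3) (complete_minus {1..6} [(1,2),(3,4)]) < 3"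
proof -
  have e: "del_vertex {1..6} 3 = {1,2,4,5,6}" by (auto simp: del_vertex_def)
  show ?thesis unfolding e
    by (rule gamma_le2[where x="(\<lambda>u. ([0, -2, -2, 0, -1, -1, -1]::int list) ! u)" and U="(\<lambda>k u. ([[0, 1, -1, 0, 0, 0, 0], [0, 0, 2, 0, 1, 1, 1]]::int list list) ! k ! u)" and W="(\<lambda>k u. ([[0, -2, 0, 0, -1, -1, -1], [0, -1, -1, 0, -1, -1, -1]]::int list list) ! k ! u)"]) (simp_all add: eval_nat_numeral edges_of_def complete_minus_def)
qed
lemma g2_d4: "gamma (del_vertex {1..6} 4) (complete_minus {1..6} [(1,2),(3,4)]) < 3"
proof -
  have e: "del_vertex {1..6} 4 = {1,2,3,5,6}" by (auto simp: del_vertex_def)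
  show ?thesis unfolding e
    by (rule gamma_le2[where x="(\<lambda>u. ([0, -2, -2, -1, 0, -1, -1]::int list) ! u)" and U="(\<lambda>k u. ([[0, 1, -1, 0, 0, 0, 0], [0, 0, 2, 1, 0, 1, 1]]::int list list) ! k ! u)" and W="(\<lambda>k u. ([[0, -2, 0, -1, 0, -1, -1], [0, -1, -1, -1, 0, -1, -1]]::int list list) ! k ! u)"]) (simp_all add: eval_nat_numeral edges_of_def complete_minus_def)
qed
lemma g2_d5: "gamma (del_vertex {1..6} 5) (complete_minus {1..6} [(1,2),(3,4)]) < 3"
proof -
  have e: "del_vertex {1..6} 5 = {1,2,3,4,6}" by (auto simp: del_vertex_def)
  show ?thesis unfolding e
    by (rule gamma_le2[where x="(\<lambda>u. ([0, 0, 0, 0, 0, 0, -2]::int list) ! u)" and U="(\<lambda>k u. ([[0, 1, 1, 0, 0, 0, 1], [0, 0, 0, 1, 1, 0, 1]]::int list list) ! k ! u)" and W="(\<lambda>k u. ([[0, 0, 0, -1, -1, 0, -1], [0, -1, -1, 0, 0, 0, -1]]::int list list) ! k ! u)"]) (simp_all add: eval_nat_numeral edges_of_def complete_minus_def)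
qed
lemma g2_d6: "gamma (del_vertex {1..6} 6) (complete_minus {1..6} [(1,2),(3,4)]) < 3"
proof -
  have e: "del_vertex {1..6} 6 = {1,2,3,4,5}" by (auto simp: del_vertex_def)
  show ?thesis unfolding e
    by (rule gamma_le2[where x="(\<lambda>u. ([0, 0, 0, 0, 0, -2, 0]::int list) ! u)" and U="(\<lambda>k u. ([[0, 1, 1, 0, 0, 1, 0], [0, 0, 0, 1, 1, 1, 0]]::int list list) ! k ! u)" and W="(\<lambda>k u. ([[0, 0, 0, -1, -1, -1, 0], [0, -1, -1, 0, 0, -1, 0]]::int list list) ! k ! u)"]) (simp_all add: eval_nat_numeral edges_of_def complete_minus_def)
qed
lemma g3_V: "{1..5} = ({1,2,3,4,5} :: nat set)" by auto
lemma g3_fac: "\<forall>u\<in>{1..5}. \<forall>v\<in>{1..5}. (if u = v then (\<lambda>u. ([0, -3, -1, -1, -1, 3]::int list) ! u) u else if (edges_of [(2,4),(3,4),(2,3),(1,4),(4,5)]) u v then -1 else 0) = (\<Sum>k<3. (\<lambda>k u. ([[0, 1, 0, 0, 0, 1], [0, 0, 1, 1, 0, 3], [0, 0, 0, 0, 1, -3]]::int list list) ! k ! u) k u * (\<lambda>k u. ([[0, -3, 0, 0, -1, 0], [0, 0, -1, -1, -1, 0], [0, -1, -1, -1, -1, -1]]::int list list) ! k ! u) k v)"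
  unfolding g3_V by (simp add: eval_nat_numeral edges_of_def complete_minus_def)
lemma g3_u1: "critical_ideal {1..5} (edges_of [(2,4),(3,4),(2,3),(1,4),(4,5)]) 1 = UNIV"
  using crit_unit[of "{1}" "{1..5}" "{4}" 1 "edges_of [(2,4),(3,4),(2,3),(1,4),(4,5)]"]
  by (simp add: minor_def Let_def eval_nat_numeral det1S det2S det3S gen_lap_def edges_of_def complete_minus_def)
lemma g3_u2: "critical_ideal {1..5} (edges_of [(2,4),(3,4),(2,3),(1,4),(4,5)]) 2 = UNIV"
  using crit_unit[of "{1,2}" "{1..5}" "{3,4}" 2 "edges_of [(2,4),(3,4),(2,3),(1,4),(4,5)]"]
  by (simp add: minor_def Let_def eval_nat_numeral det1S det2S det3S gen_lap_def edges_of_def complete_minus_def)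
lemma g3_u3: "critical_ideal {1..5} (edges_of [(2,4),(3,4),(2,3),(1,4),(4,5)]) 3 = UNIV"
  using crit_unit[of "{1,2,4}" "{1..5}" "{3,4,5}" 3 "edges_of [(2,4),(3,4),(2,3),(1,4),(4,5)]"]
  by (simp add: minor_def Let_def eval_nat_numeral det1S det2S det3S gen_lap_def edges_of_def complete_minus_def)
lemma g3_gamma: "gamma {1..5} (edges_of [(2,4),(3,4),(2,3),(1,4),(4,5)]) = 3"
  by (rule gamma_eq3[OF g3_fac _ _ g3_u1 g3_u2 g3_u3]) auto
lemma g3_d1: "gamma (del_vertex {1..5} 1) (edges_of [(2,4),(3,4),(2,3),(1,4),(4,5)]) < 3"
proof -
  have e: "del_vertex {1..5} 1 = {2,3,4,5}" by (auto simp: del_vertex_def)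
  show ?thesis unfolding e
    by (rule gamma_le2[where x="(\<lambda>u. ([0, 0, -1, -1, -2, -1]::int list) ! u)" and U="(\<lambda>k u. ([[0, 0, 1, 1, 0, -1], [0, 0, 0, 0, 1, 1]]::int list list) ! k ! u)" and W="(\<lambda>k u. ([[0, 0, -1, -1, -1, 0], [0, 0, -1, -1, -2, -1]]::int list list) ! k ! u)"]) (simp_all add: eval_nat_numeral edges_of_def complete_minus_def)
qed
lemma g3_d2: "gamma (del_vertex {1..5} 2) (edges_of [(2,4),(3,4),(2,3),(1,4),(4,5)]) < 3"
proof -
  have e: "del_vertex {1..5} 2 = {1,3,4,5}" by (auto simp: del_vertex_def)
  show ?thesis unfolding e
    by (rule gamma_le2[where x="(\<lambda>u. ([0, 0, 0, 0, -3, 0]::int list) ! u)" and U="(\<lambda>k u. ([[0, 1, 0, 1, 0, 1], [0, 0, 0, 0, 1, 0]]::int list list) ! k ! u)" and W="(\<lambda>k u. ([[0, 0, 0, 0, -1, 0], [0, -1, 0, -1, -3, -1]]::int list list) ! k ! u)"]) (simp_all add: eval_nat_numeral edges_of_def complete_minus_def)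
qed
lemma g3_d3: "gamma (del_vertex {1..5} 3) (edges_of [(2,4),(3,4),(2,3),(1,4),(4,5)]) < 3"
proof -
  have e: "del_vertex {1..5} 3 = {1,2,4,5}" by (auto simp: del_vertex_def)
  show ?thesis unfolding e
    by (rule gamma_le2[where x="(\<lambda>u. ([0, 0, 0, 0, -3, 0]::int list) ! u)" and U="(\<lambda>k u. ([[0, 1, 1, 0, 0, 1], [0, 0, 0, 0, 1, 0]]::int list list) ! k ! u)" and W="(\<lambda>k u. ([[0, 0, 0, 0, -1, 0], [0, -1, -1, 0, -3, -1]]::int list list) ! k ! u)"]) (simp_all add: eval_nat_numeral edges_of_def complete_minus_def)
qed
lemma g3_d4: "gamma (del_vertex {1..5} 4) (edges_of [(2,4),(3,4),(2,3),(1,4),(4,5)]) < 3"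
proof -
  have e: "del_vertex {1..5} 4 = {1,2,3,5}" by (auto simp: del_vertex_def)
  show ?thesis unfolding e
    by (rule gamma_le2[where x="(\<lambda>u. ([0, -3, -1, -1, 0, 0]::int list) ! u)" and U="(\<lambda>k u. ([[0, 1, 0, 0, 0, 0], [0, 0, 1, 1, 0, 0]]::int list list) ! k ! u)" and W="(\<lambda>k u. ([[0, -3, 0, 0, 0, 0], [0, 0, -1, -1, 0, 0]]::int list list) ! k ! u)"]) (simp_all add: eval_nat_numeral edges_of_def complete_minus_def)
qed
lemma g3_d5: "gamma (del_vertex {1..5} 5) (edges_of [(2,4),(3,4),(2,3),(1,4),(4,5)]) < 3"
proof -
  have e: "del_vertex {1..5} 5 = {1,2,3,4}" by (auto simp: del_vertex_def)
  show ?thesis unfolding e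
    by (rule gamma_le2[where x="(\<lambda>u. ([0, -1, -1, -1, -2, 0]::int list) ! u)" and U="(\<lambda>k u. ([[0, 1, 0, 0, 1, 0], [0, 0, 1, 1, 1, 0]]::int list list) ! k ! u)" and W="(\<lambda>k u. ([[0, -1, 0, 0, -1, 0], [0, 0, -1, -1, -1, 0]]::int list list) ! k ! u)"]) (simp_all add: eval_nat_numeral edges_of_def complete_minus_def)
qed
lemma g4_V: "{1..5} = ({1,2,3,4,5} :: nat set)" by auto
lemma g4_fac: "\<forall>u\<in>{1..5}. \<forall>v\<in>{1..5}. (if u = v then (\<lambda>u. ([0, -2, -1, -2, -2, -1]::int list) ! u) u else if (edges_of [(1,2),(1,4),(2,3),(2,4),(3,4),(4,5)]) u v then -1 else 0) = (\<Sum>k<3. (\<lambda>k u. ([[0, 1, 0, -1, 0, 0], [0, 0, 1, 2, 0, -1], [0, 0, 0, 0, 1, 1]]::int list list) ! k ! u) k u * (\<lambda>k u. ([[0, -2, -1, 0, -1, 0], [0, -1, -1, -1, -1, 0], [0, -1, -1, -1, -2, -1]]::int list list) ! k ! u) k v)"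
  unfolding g4_V by (simp add: eval_nat_numeral edges_of_def complete_minus_def)
lemma g4_u1: "critical_ideal {1..5} (edges_of [(1,2),(1,4),(2,3),(2,4),(3,4),(4,5)]) 1 = UNIV"
  using crit_unit[of "{1}" "{1..5}" "{2}" 1 "edges_of [(1,2),(1,4),(2,3),(2,4),(3,4),(4,5)]"]
  by (simp add: minor_def Let_def eval_nat_numeral det1S det2S det3S gen_lap_def edges_of_def complete_minus_def)
lemma g4_u2: "critical_ideal {1..5} (edges_of [(1,2),(1,4),(2,3),(2,4),(3,4),(4,5)]) 2 = UNIV"
  using crit_unit[of "{1,2}" "{1..5}" "{2,3}" 2 "edges_of [(1,2),(1,4),(2,3),(2,4),(3,4),(4,5)]"]
  by (simp add: minor_def Let_def eval_nat_numeral det1S det2S det3S gen_lap_def edges_of_def complete_minus_def)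
lemma g4_u3: "critical_ideal {1..5} (edges_of [(1,2),(1,4),(2,3),(2,4),(3,4),(4,5)]) 3 = UNIV"
  using crit_unit[of "{1,2,4}" "{1..5}" "{2,3,5}" 3 "edges_of [(1,2),(1,4),(2,3),(2,4),(3,4),(4,5)]"]
  by (simp add: minor_def Let_def eval_nat_numeral det1S det2S det3S gen_lap_def edges_of_def complete_minus_def)
lemma g4_gamma: "gamma {1..5} (edges_of [(1,2),(1,4),(2,3),(2,4),(3,4),(4,5)]) = 3"
  by (rule gamma_eq3[OF g4_fac _ _ g4_u1 g4_u2 g4_u3]) auto
lemma g4_d1: "gamma (del_vertex {1..5} 1) (edges_of [(1,2),(1,4),(2,3),(2,4),(3,4),(4,5)]) < 3"
proof -
  have e: "del_vertex {1..5} 1 = {2,3,4,5}" by (auto simp: del_vertex_def)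
  show ?thesis unfolding e
    by (rule gamma_le2[where x="(\<lambda>u. ([0, 0, -1, -1, -2, -1]::int list) ! u)" and U="(\<lambda>k u. ([[0, 0, 1, 1, 0, -1], [0, 0, 0, 0, 1, 1]]::int list list) ! k ! u)" and W="(\<lambda>k u. ([[0, 0, -1, -1, -1, 0], [0, 0, -1, -1, -2, -1]]::int list list) ! k ! u)"]) (simp_all add: eval_nat_numeral edges_of_def complete_minus_def)
qed
lemma g4_d2: "gamma (del_vertex {1..5} 2) (edges_of [(1,2),(1,4),(2,3),(2,4),(3,4),(4,5)]) < 3"
proof -
  have e: "del_vertex {1..5} 2 = {1,3,4,5}" by (auto simp: del_vertex_def)
  show ?thesis unfolding e
    by (rule gamma_le2[where x="(\<lambda>u. ([0, 0, 0, 0, -3, 0]::int list) ! u)" and U="(\<lambda>k u. ([[0, 1, 0, 1, 0, 1], [0, 0, 0, 0, 1, 0]]::int list list) ! k ! u)" and W="(\<lambda>k u. ([[0, 0, 0, 0, -1, 0], [0, -1, 0, -1, -3, -1]]::int list list) ! k ! u)"]) (simp_all add: eval_nat_numeral edges_of_def complete_minus_def)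
qed
lemma g4_d3: "gamma (del_vertex {1..5} 3) (edges_of [(1,2),(1,4),(2,3),(2,4),(3,4),(4,5)]) < 3"
proof -
  have e: "del_vertex {1..5} 3 = {1,2,4,5}" by (auto simp: del_vertex_def)
  show ?thesis unfolding e
    by (rule gamma_le2[where x="(\<lambda>u. ([0, -1, -1, 0, -2, -1]::int list) ! u)" and U="(\<lambda>k u. ([[0, 1, 1, 0, 0, -1], [0, 0, 0, 0, 1, 1]]::int list list) ! k ! u)" and W="(\<lambda>k u. ([[0, -1, -1, 0, -1, 0], [0, -1, -1, 0, -2, -1]]::int list list) ! k ! u)"]) (simp_all add: eval_nat_numeral edges_of_def complete_minus_def)
qed
lemma g4_d4: "gamma (del_vertex {1..5} 4) (edges_of [(1,2),(1,4),(2,3),(2,4),(3,4),(4,5)]) < 3"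
proof -
  have e: "del_vertex {1..5} 4 = {1,2,3,5}" by (auto simp: del_vertex_def)
  show ?thesis unfolding e
    by (rule gamma_le2[where x="(\<lambda>u. ([0, -3, 0, 3, 0, 0]::int list) ! u)" and U="(\<lambda>k u. ([[0, 1, 0, 1, 0, 0], [0, 0, 1, -3, 0, 0]]::int list list) ! k ! u)" and W="(\<lambda>k u. ([[0, -3, -1, 0, 0, 0], [0, -1, 0, -1, 0, 0]]::int list list) ! k ! u)"]) (simp_all add: eval_nat_numeral edges_of_def complete_minus_def)
qed
lemma g4_d5: "gamma (del_vertex {1..5} 5) (edges_of [(1,2),(1,4),(2,3),(2,4),(3,4),(4,5)]) < 3"
proof -
  have e: "del_vertex {1..5} 5 = {1,2,3,4}" by (auto simp: del_vertex_def)
  show ?thesis unfolding e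
    by (rule gamma_le2[where x="(\<lambda>u. ([0, -2, -1, -2, -1, 0]::int list) ! u)" and U="(\<lambda>k u. ([[0, 1, 0, -1, 0, 0], [0, 0, 1, 2, 1, 0]]::int list list) ! k ! u)" and W="(\<lambda>k u. ([[0, -2, -1, 0, -1, 0], [0, -1, -1, -1, -1, 0]]::int list list) ! k ! u)"]) (simp_all add: eval_nat_numeral edges_of_def complete_minus_def)
qed

lemma all_less_Suc_iff: "(\<forall>i<Suc n. P i) = (P 0 \<and> (\<forall>i<n. P (Suc i)))"
  by (metis less_Suc_eq_0_disj)

lemma walk:
  "set p \<subseteq> V \<Longrightarrow> a \<in> V \<Longrightarrow> (\<forall>i<length p. E ((a#p)!i) (p!i)) \<Longrightarrow>
   (\<lambda>x y. x \<in> V \<and> y \<in> V \<and> E x y)\<^sup>*\<^sup>* a (last (a#p))"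
proof (induction p arbitrary: a)
  case Nil then show ?case by simp
next
  case (Cons b p)
  have ab: "E a b" using Cons.prems(3) by (metis length_Cons nth_Cons_0 zero_less_Suc)
  have "\<forall>i<length p. E ((b#p)!i) (p!i)"
  proof (intro allI impI)
    fix i assume "i < length p"
    then show "E ((b#p)!i) (p!i)" using Cons.prems(3)[rule_format, of "Suc i"] by simp
  qed
  then have "(\<lambda>x y. x \<in> V \<and> y \<in> V \<and> E x y)\<^sup>*\<^sup>* b (last (b#p))"
    using Cons.IH Cons.prems by simp
  moreover have "(\<lambda>x y. x \<in> V \<and> y \<in> V \<and> E x y) a b" using ab Cons.prems by simp
  ultimately have "(\<lambda>x y. x \<in> V \<and> y \<in> V \<and> E x y)\<^sup>*\<^sup>* a (last (b#p))"
    by (rule converse_rtranclp_into_rtranclp[rotated])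
  then show ?case by simp
qed

lemma conn_paths:
  assumes c: "c \<in> V" and sym: "\<forall>u\<in>V. \<forall>v\<in>V. E u v \<longrightarrow> E v u"
    and P: "\<forall>v\<in>V. set (P v) \<subseteq> V \<and> last (c # P v) = v \<and> (\<forall>i<length (P v). E ((c # P v)!i) (P v ! i))"
  shows "connected_graph V E"
proof -
  let ?R = "\<lambda>x y. x \<in> V \<and> y \<in> V \<and> E x y"
  have s: "symp ?R" using sym by (auto simp: symp_def)
  have cv: "?R\<^sup>*\<^sup>* c v" if v: "v \<in> V" for v
  proof -
    have h: "set (P v) \<subseteq> V" "last (c # P v) = v" "\<forall>i<length (P v). E ((c # P v)!i) (P v ! i)"
      using P v by auto
    from walk[OF h(1) c h(3)] h(2) show ?thesis by simp
  qed
  have vc: "?R\<^sup>*\<^sup>* v c" if v: "v \<in> V" for v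
    by (rule sympD[OF symp_rtranclp[OF s] cv[OF v]])
  show ?thesis unfolding connected_graph_def
  proof (intro conjI ballI)
    show "V \<noteq> {}" using c by auto
    fix u v assume u: "u \<in> V" and v: "v \<in> V"
    show "?R\<^sup>*\<^sup>* u v" by (rule rtranclp_trans[OF vc[OF u] cv[OF v]])
  qed
qed

lemma g0_conn: "connected_graph {1..4} (edges_of [(1,2),(2,3),(3,4)])"
  by (rule conn_paths[where c=2 and P="(\<lambda>v. [[], [1], [], [3], [3,4]] ! v)"]) (simp_all only: g0_V, simp_all add: edges_of_def complete_minus_def all_less_Suc_iff)
lemma g0_simple: "simple_graph {1..4} (edges_of [(1,2),(2,3),(3,4)])"
  by (auto simp: simple_graph_def edges_of_def complete_minus_def)
lemma g1_conn: "connected_graph {1..5} (complete_minus {1..5} [(1,2),(2,3)])"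
  by (rule conn_paths[where c=4 and P="(\<lambda>v. [[], [1], [2], [3], [], [5]] ! v)"]) (simp_all only: g1_V, simp_all add: edges_of_def complete_minus_def all_less_Suc_iff)
lemma g1_simple: "simple_graph {1..5} (complete_minus {1..5} [(1,2),(2,3)])"
  by (auto simp: simple_graph_def edges_of_def complete_minus_def)
lemma g2_conn: "connected_graph {1..6} (complete_minus {1..6} [(1,2),(3,4)])"
  by (rule conn_paths[where c=5 and P="(\<lambda>v. [[], [1], [2], [3], [4], [], [6]] ! v)"]) (simp_all only: g2_V, simp_all add: edges_of_def complete_minus_def all_less_Suc_iff)
lemma g2_simple: "simple_graph {1..6} (complete_minus {1..6} [(1,2),(3,4)])"
  by (auto simp: simple_graph_def edges_of_def complete_minus_def)
lemma g3_conn: "connected_graph {1..5} (edges_of [(2,4),(3,4),(2,3),(1,4),(4,5)])"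
  by (rule conn_paths[where c=4 and P="(\<lambda>v. [[], [1], [2], [3], [], [5]] ! v)"]) (simp_all only: g3_V, simp_all add: edges_of_def complete_minus_def all_less_Suc_iff)
lemma g3_simple: "simple_graph {1..5} (edges_of [(2,4),(3,4),(2,3),(1,4),(4,5)])"
  by (auto simp: simple_graph_def edges_of_def complete_minus_def)
lemma g4_conn: "connected_graph {1..5} (edges_of [(1,2),(1,4),(2,3),(2,4),(3,4),(4,5)])"
  by (rule conn_paths[where c=4 and P="(\<lambda>v. [[], [1], [2], [3], [], [5]] ! v)"]) (simp_all only: g4_V, simp_all add: edges_of_def complete_minus_def all_less_Suc_iff)
lemma g4_simple: "simple_graph {1..5} (edges_of [(1,2),(1,4),(2,3),(2,4),(3,4),(4,5)])"
  by (auto simp: simple_graph_def edges_of_def complete_minus_def)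

lemma g0_forb: "Forb_le 2 {1..4} (edges_of [(1,2),(2,3),(3,4)])"
proof -
  have "\<forall>v\<in>{1..4}. gamma (del_vertex {1..4} v) (edges_of [(1,2),(2,3),(3,4)]) < gamma {1..4} (edges_of [(1,2),(2,3),(3,4)])"
  proof
    fix v :: nat assume "v \<in> {1..4}"
    then have "v = 1 \<or> v = 2 \<or> v = 3 \<or> v = 4" by auto
    then show "gamma (del_vertex {1..4} v) (edges_of [(1,2),(2,3),(3,4)]) < gamma {1..4} (edges_of [(1,2),(2,3),(3,4)])"
      using g0_d1 g0_d2 g0_d3 g0_d4 g0_gamma by auto
  qed
  then show ?thesis unfolding Forb_le_def using g0_simple g0_conn g0_gamma by simp
qed

lemma g1_forb: "Forb_le 2 {1..5} (complete_minus {1..5} [(1,2),(2,3)])"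
proof -
  have "\<forall>v\<in>{1..5}. gamma (del_vertex {1..5} v) (complete_minus {1..5} [(1,2),(2,3)]) < gamma {1..5} (complete_minus {1..5} [(1,2),(2,3)])"
  proof
    fix v :: nat assume "v \<in> {1..5}"
    then have "v = 1 \<or> v = 2 \<or> v = 3 \<or> v = 4 \<or> v = 5" by auto
    then show "gamma (del_vertex {1..5} v) (complete_minus {1..5} [(1,2),(2,3)]) < gamma {1..5} (complete_minus {1..5} [(1,2),(2,3)])"
      using g1_d1 g1_d2 g1_d3 g1_d4 g1_d5 g1_gamma by auto
  qed
  then show ?thesis unfolding Forb_le_def using g1_simple g1_conn g1_gamma by simp
qed

lemma g2_forb: "Forb_le 2 {1..6} (complete_minus {1..6} [(1,2),(3,4)])"
proof -
  have "\<forall>v\<in>{1..6}. gamma (del_vertex {1..6} v) (complete_minus {1..6} [(1,2),(3,4)]) < gamma {1..6} (complete_minus {1..6} [(1,2),(3,4)])"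
  proof
    fix v :: nat assume "v \<in> {1..6}"
    then have "v = 1 \<or> v = 2 \<or> v = 3 \<or> v = 4 \<or> v = 5 \<or> v = 6" by auto
    then show "gamma (del_vertex {1..6} v) (complete_minus {1..6} [(1,2),(3,4)]) < gamma {1..6} (complete_minus {1..6} [(1,2),(3,4)])"
      using g2_d1 g2_d2 g2_d3 g2_d4 g2_d5 g2_d6 g2_gamma by auto
  qed
  then show ?thesis unfolding Forb_le_def using g2_simple g2_conn g2_gamma by simp
qed

lemma g3_forb: "Forb_le 2 {1..5} (edges_of [(2,4),(3,4),(2,3),(1,4),(4,5)])"
proof -
  have "\<forall>v\<in>{1..5}. gamma (del_vertex {1..5} v) (edges_of [(2,4),(3,4),(2,3),(1,4),(4,5)]) < gamma {1..5} (edges_of [(2,4),(3,4),(2,3),(1,4),(4,5)])"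
  proof
    fix v :: nat assume "v \<in> {1..5}"
    then have "v = 1 \<or> v = 2 \<or> v = 3 \<or> v = 4 \<or> v = 5" by auto
    then show "gamma (del_vertex {1..5} v) (edges_of [(2,4),(3,4),(2,3),(1,4),(4,5)]) < gamma {1..5} (edges_of [(2,4),(3,4),(2,3),(1,4),(4,5)])"
      using g3_d1 g3_d2 g3_d3 g3_d4 g3_d5 g3_gamma by auto
  qed
  then show ?thesis unfolding Forb_le_def using g3_simple g3_conn g3_gamma by simp
qed

lemma g4_forb: "Forb_le 2 {1..5} (edges_of [(1,2),(1,4),(2,3),(2,4),(3,4),(4,5)])"
proof -
  have "\<forall>v\<in>{1..5}. gamma (del_vertex {1..5} v) (edges_of [(1,2),(1,4),(2,3),(2,4),(3,4),(4,5)]) < gamma {1..5} (edges_of [(1,2),(1,4),(2,3),(2,4),(3,4),(4,5)])"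
  proof
    fix v :: nat assume "v \<in> {1..5}"
    then have "v = 1 \<or> v = 2 \<or> v = 3 \<or> v = 4 \<or> v = 5" by auto
    then show "gamma (del_vertex {1..5} v) (edges_of [(1,2),(1,4),(2,3),(2,4),(3,4),(4,5)]) < gamma {1..5} (edges_of [(1,2),(1,4),(2,3),(2,4),(3,4),(4,5)])"
      using g4_d1 g4_d2 g4_d3 g4_d4 g4_d5 g4_gamma by auto
  qed
  then show ?thesis unfolding Forb_le_def using g4_simple g4_conn g4_gamma by simp
qed

theorem proposition4p1:
  shows "\<forall>(V, E) \<in> F2. Forb_le 2 V E"
  using g0_forb g1_forb g2_forb g3_forb g4_forb unfolding F2_def by auto

end
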